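(* Let $G,H$ be discrete groups, $\mathcal{A}=(A_g)_{g\in G}$ and $\mathcal{B}=(B_h)_{h\in H}$ Fell bundles, $\varphi\in\mathrm{Hom}(G,H)$, $\rho$ an $(\mathcal{A},\varphi)$-action on a Hilbert $\mathcal{B}$-bundle $\mathcal{X}=(X_h)_{h\in H}$, and $x\in X_e$. Then for each $g\in G$ the map $T_g:A_g\to B_{\varphi(g)}$, $T_g(a)=\langle x,\rho(a)x\rangle_{\mathcal{B}}$, is well-defined, linear and bounded, and $T=(T_g)_{g\in G}$ is a positive definite $\mathcal{A}$-$\varphi$-$\mathcal{B}$ bundle map.
   Context: Groups are discrete, $e$ denotes units. Fell bundles are in the sense of Exel (Banach spaces $A_g$ with bilinear associative products $A_g\times A_h\to A_{gh}$, conjugate-linear involutions $A_g\to A_{g^{-1}}$, $\|ab\|\le\|a\|\|b\|$, $(ab)^*=b^*a^*$, $\|a^*a\|=\|a\|^2$, $a^*a\ge0$ in the $C^*$-algebra $A_e$); $\mathcal{A}$ also denotes the disjoint union of fibres. A Hilbert $\mathcal{B}$-bundle is a family $\mathcal{X}=(X_r)_{r\in H}$ of Banach spaces with maps $(x,b)\mapsto xb$ and $(x,y)\mapsto\langle x,y\rangle_{\mathcal{B}}\in\mathcal{B}$ such that: $X_rB_s\subseteq X_{rs}$ bilinearly; $\langle X_r,X_s\rangle_{\mathcal{B}}\subseteq B_{r^{-1}s}$, linear in the second variable; $\langle x,yb\rangle_{\mathcal{B}}=\langle x,y\rangle_{\mathcal{B}}b$, $\langle x,y\rangle_{\mathcal{B}}^*=\langle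 y,x\rangle_{\mathcal{B}}$; $\langle x,x\rangle_{\mathcal{B}}\ge0$ in $B_e$, zero only for $x=0$; $\|x\|=\|\langle x,x\rangle_{\mathcal{B}}\|^{1/2}$. An $(\mathcal{A},\varphi)$-action on $\mathcal{X}$ is a map $\rho$ from $\mathcal{A}$ to the maps $\mathcal{X}\to\mathcal{X}$ with: $\rho(A_g)X_h\subseteq X_{\varphi(g)h}$, $(a,x)\mapsto\rho(a)x$ bilinear there; $\rho(aa')=\rho(a)\rho(a')$; $\langle\rho(a)x,y\rangle_{\mathcal{B}}=\langle x,\rho(a^* )y\rangle_{\mathcal{B}}$; $(\rho(a)x)b=\rho(a)(xb)$. An $\mathcal{A}$-$\varphi$-$\mathcal{B}$ bundle map is a family of bounded linear maps $T_g:A_g\to B_{\varphi(g)}$; it is positive definite if $\sum_{i,j=1}^nb_iT_{g_i^{-1}g_j}(a_i^*a_j)b_j^*\ge0$ in $B_e$ for all $n$, $g_i\in G$, $a_i\in A_{g_i}$, $b_i\in B_{\varphi(g_i)}$. *)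

theory Defs
  imports "HOL-Analysis.Analysis" "HOL-Algebra.Group"
begin

text \<open>Complex Banach spaces are modelled as complete complex subspaces of an ambient
real normed vector space carrying a compatible complex scalar multiplication sc.
The fibres of a bundle are such subspaces, pairwise intersecting only in 0.\<close>

definition complex_scaling :: "(complex \<Rightarrow> 'a::real_normed_vector \<Rightarrow> 'a) \<Rightarrow> bool" where
  "complex_scaling sc \<longleftrightarrow>
     (\<forall>x. sc 1 x = x) \<and>
     (\<forall>c d x. sc c (sc d x) = sc (c * d) x) \<and>
     (\<forall>c d x. sc (c + d) x = sc c x + sc d x) \<and>
     (\<forall>c x y. sc c (x + y) = sc c x + sc c y) \<and>
     (\<forall>r x. sc (complex_of_real r) x = r *\<^sub>R x) \<and>
     (\<forall>c x. norm (sc c x) = cmod c * norm x)"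

definition csubspace :: "(complex \<Rightarrow> 'a::real_normed_vector \<Rightarrow> 'a) \<Rightarrow> 'a set \<Rightarrow> bool" where
  "csubspace sc S \<longleftrightarrow> 0 \<in> S \<and> (\<forall>x\<in>S. \<forall>y\<in>S. x + y \<in> S) \<and> (\<forall>c. \<forall>x\<in>S. sc c x \<in> S)"

definition banach_fibre :: "(complex \<Rightarrow> 'a::real_normed_vector \<Rightarrow> 'a) \<Rightarrow> 'a set \<Rightarrow> bool" where
  "banach_fibre sc S \<longleftrightarrow> csubspace sc S \<and> complete S"

definition clinear_on ::
  "(complex \<Rightarrow> 'a::real_normed_vector \<Rightarrow> 'a) \<Rightarrow> (complex \<Rightarrow> 'b::real_normed_vector \<Rightarrow> 'b)
    \<Rightarrow> 'a set \<Rightarrow> ('a \<Rightarrow> 'b) \<Rightarrow> bool" where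
  "clinear_on sc1 sc2 S f \<longleftrightarrow>
     (\<forall>x\<in>S. \<forall>y\<in>S. f (x + y) = f x + f y) \<and> (\<forall>c. \<forall>x\<in>S. f (sc1 c x) = sc2 c (f x))"

text \<open>Spectrum in a (possibly non-unital) algebra C, computed in the unitization:
  0 is always in it, and \<lambda> \<noteq> 0 is in it iff a/\<lambda> is not quasi-invertible.\<close>
definition quasi_invertible :: "'a set \<Rightarrow> ('a::real_normed_vector \<Rightarrow> 'a \<Rightarrow> 'a) \<Rightarrow> 'a \<Rightarrow> bool" where
  "quasi_invertible C mul a \<longleftrightarrow> (\<exists>b\<in>C. a + b - mul a b = 0 \<and> a + b - mul b a = 0)"

definition alg_spectrum ::
  "'a set \<Rightarrow> (complex \<Rightarrow> 'a::real_normed_vector \<Rightarrow> 'a) \<Rightarrow> ('a \<Rightarrow> 'a \<Rightarrow> 'a) \<Rightarrow> 'a \<Rightarrow> complex set" where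
  "alg_spectrum C sc mul a = {z. z = 0 \<or> \<not> quasi_invertible C mul (sc (inverse z) a)}"

definition positive_elem ::
  "'a set \<Rightarrow> (complex \<Rightarrow> 'a::real_normed_vector \<Rightarrow> 'a) \<Rightarrow> ('a \<Rightarrow> 'a \<Rightarrow> 'a) \<Rightarrow> ('a \<Rightarrow> 'a) \<Rightarrow> 'a \<Rightarrow> bool" where
  "positive_elem C sc mul star a \<longleftrightarrow>
     a \<in> C \<and> star a = a \<and> alg_spectrum C sc mul a \<subseteq> {complex_of_real r | r. r \<ge> 0}"

definition fell_bundle ::
  "('g, 'gm) monoid_scheme \<Rightarrow> (complex \<Rightarrow> 'a::real_normed_vector \<Rightarrow> 'a) \<Rightarrow> ('g \<Rightarrow> 'a set)
    \<Rightarrow> ('a \<Rightarrow> 'a \<Rightarrow> 'a) \<Rightarrow> ('a \<Rightarrow> 'a) \<Rightarrow> bool" where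
  "fell_bundle G sc A mul star \<longleftrightarrow>
     complex_scaling sc \<and>
     (\<forall>g\<in>carrier G. banach_fibre sc (A g)) \<and>
     (\<forall>g\<in>carrier G. \<forall>h\<in>carrier G. g \<noteq> h \<longrightarrow> A g \<inter> A h = {0}) \<and>
     (\<forall>g\<in>carrier G. \<forall>h\<in>carrier G. \<forall>a\<in>A g. \<forall>b\<in>A h. mul a b \<in> A (g \<otimes>\<^bsub>G\<^esub> h)) \<and>
     (\<forall>g\<in>carrier G. \<forall>h\<in>carrier G. \<forall>a\<in>A g. \<forall>a'\<in>A g. \<forall>b\<in>A h. \<forall>b'\<in>A h. \<forall>c.
        mul (a + a') b = mul a b + mul a' b \<and>
        mul a (b + b') = mul a b + mul a b' \<and>
        mul (sc c a) b = sc c (mul a b) \<and>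
        mul a (sc c b) = sc c (mul a b)) \<and>
     (\<forall>g\<in>carrier G. \<forall>h\<in>carrier G. \<forall>k\<in>carrier G. \<forall>a\<in>A g. \<forall>b\<in>A h. \<forall>c\<in>A k.
        mul (mul a b) c = mul a (mul b c)) \<and>
     (\<forall>g\<in>carrier G. \<forall>a\<in>A g. star a \<in> A (inv\<^bsub>G\<^esub> g) \<and> star (star a) = a) \<and>
     (\<forall>g\<in>carrier G. \<forall>a\<in>A g. \<forall>a'\<in>A g. \<forall>c.
        star (a + a') = star a + star a' \<and> star (sc c a) = sc (cnj c) (star a)) \<and>
     (\<forall>g\<in>carrier G. \<forall>h\<in>carrier G. \<forall>a\<in>A g. \<forall>b\<in>A h.
        norm (mul a b) \<le> norm a * norm b \<and> star (mul a b) = mul (star b) (star a)) \<and>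
     (\<forall>g\<in>carrier G. \<forall>a\<in>A g.
        norm (mul (star a) a) = (norm a)\<^sup>2 \<and>
        positive_elem (A \<one>\<^bsub>G\<^esub>) sc mul star (mul (star a) a))"

definition hilbert_bundle ::
  "('h, 'hm) monoid_scheme \<Rightarrow> (complex \<Rightarrow> 'b::real_normed_vector \<Rightarrow> 'b) \<Rightarrow> ('h \<Rightarrow> 'b set)
    \<Rightarrow> ('b \<Rightarrow> 'b \<Rightarrow> 'b) \<Rightarrow> ('b \<Rightarrow> 'b)
    \<Rightarrow> (complex \<Rightarrow> 'x::real_normed_vector \<Rightarrow> 'x) \<Rightarrow> ('h \<Rightarrow> 'x set)
    \<Rightarrow> ('x \<Rightarrow> 'b \<Rightarrow> 'x) \<Rightarrow> ('x \<Rightarrow> 'x \<Rightarrow> 'b) \<Rightarrow> bool" where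
  "hilbert_bundle H scB B multB starB scX X rmul ip \<longleftrightarrow>
     complex_scaling scX \<and>
     (\<forall>r\<in>carrier H. banach_fibre scX (X r)) \<and>
     (\<forall>r\<in>carrier H. \<forall>s\<in>carrier H. r \<noteq> s \<longrightarrow> X r \<inter> X s = {0}) \<and>
     (\<forall>r\<in>carrier H. \<forall>s\<in>carrier H. \<forall>x\<in>X r. \<forall>b\<in>B s. rmul x b \<in> X (r \<otimes>\<^bsub>H\<^esub> s)) \<and>
     (\<forall>r\<in>carrier H. \<forall>s\<in>carrier H. \<forall>x\<in>X r. \<forall>x'\<in>X r. \<forall>b\<in>B s. \<forall>b'\<in>B s. \<forall>c.
        rmul (x + x') b = rmul x b + rmul x' b \<and>
        rmul x (b + b') = rmul x b + rmul x b' \<and>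
        rmul (scX c x) b = scX c (rmul x b) \<and>
        rmul x (scB c b) = scX c (rmul x b)) \<and>
     (\<forall>r\<in>carrier H. \<forall>s\<in>carrier H. \<forall>x\<in>X r. \<forall>y\<in>X s.
        ip x y \<in> B (inv\<^bsub>H\<^esub> r \<otimes>\<^bsub>H\<^esub> s)) \<and>
     (\<forall>r\<in>carrier H. \<forall>s\<in>carrier H. \<forall>x\<in>X r. \<forall>y\<in>X s. \<forall>y'\<in>X s. \<forall>c.
        ip x (y + y') = ip x y + ip x y' \<and> ip x (scX c y) = scB c (ip x y)) \<and>
     (\<forall>r\<in>carrier H. \<forall>s\<in>carrier H. \<forall>t\<in>carrier H. \<forall>x\<in>X r. \<forall>y\<in>X s. \<forall>b\<in>B t.
        ip x (rmul y b) = multB (ip x y) b) \<and>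
     (\<forall>r\<in>carrier H. \<forall>s\<in>carrier H. \<forall>x\<in>X r. \<forall>y\<in>X s. starB (ip x y) = ip y x) \<and>
     (\<forall>r\<in>carrier H. \<forall>x\<in>X r.
        positive_elem (B \<one>\<^bsub>H\<^esub>) scB multB starB (ip x x) \<and>
        (ip x x = 0 \<longrightarrow> x = 0) \<and>
        norm x = sqrt (norm (ip x x)))"

definition bundle_action ::
  "('g, 'gm) monoid_scheme \<Rightarrow> ('h, 'hm) monoid_scheme \<Rightarrow> ('g \<Rightarrow> 'h)
    \<Rightarrow> (complex \<Rightarrow> 'a::real_normed_vector \<Rightarrow> 'a) \<Rightarrow> ('g \<Rightarrow> 'a set) \<Rightarrow> ('a \<Rightarrow> 'a \<Rightarrow> 'a) \<Rightarrow> ('a \<Rightarrow> 'a)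
    \<Rightarrow> (complex \<Rightarrow> 'x::real_normed_vector \<Rightarrow> 'x) \<Rightarrow> ('h \<Rightarrow> 'x set)
    \<Rightarrow> ('x \<Rightarrow> 'b::real_normed_vector \<Rightarrow> 'x) \<Rightarrow> ('x \<Rightarrow> 'x \<Rightarrow> 'b) \<Rightarrow> ('h \<Rightarrow> 'b set)
    \<Rightarrow> ('a \<Rightarrow> 'x \<Rightarrow> 'x) \<Rightarrow> bool" where
  "bundle_action G H \<phi> scA A multA starA scX X rmul ip B rho \<longleftrightarrow>
     (\<forall>g\<in>carrier G. \<forall>h\<in>carrier H. \<forall>a\<in>A g. \<forall>x\<in>X h. rho a x \<in> X (\<phi> g \<otimes>\<^bsub>H\<^esub> h)) \<and>
     (\<forall>g\<in>carrier G. \<forall>h\<in>carrier H. \<forall>a\<in>A g. \<forall>a'\<in>A g. \<forall>x\<in>X h. \<forall>x'\<in>X h. \<forall>c.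
        rho (a + a') x = rho a x + rho a' x \<and>
        rho a (x + x') = rho a x + rho a x' \<and>
        rho (scA c a) x = scX c (rho a x) \<and>
        rho a (scX c x) = scX c (rho a x)) \<and>
     (\<forall>g\<in>carrier G. \<forall>g'\<in>carrier G. \<forall>a\<in>A g. \<forall>a'\<in>A g'. \<forall>h\<in>carrier H. \<forall>x\<in>X h.
        rho (multA a a') x = rho a (rho a' x)) \<and>
     (\<forall>g\<in>carrier G. \<forall>a\<in>A g. \<forall>r\<in>carrier H. \<forall>s\<in>carrier H. \<forall>x\<in>X r. \<forall>y\<in>X s.
        ip (rho a x) y = ip x (rho (starA a) y)) \<and>
     (\<forall>g\<in>carrier G. \<forall>a\<in>A g. \<forall>r\<in>carrier H. \<forall>s\<in>carrier H. \<forall>x\<in>X r. \<forall>b\<in>B s.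
        rmul (rho a x) b = rho a (rmul x b))"

definition bundle_map ::
  "('g, 'gm) monoid_scheme \<Rightarrow> ('g \<Rightarrow> 'h)
    \<Rightarrow> (complex \<Rightarrow> 'a::real_normed_vector \<Rightarrow> 'a) \<Rightarrow> ('g \<Rightarrow> 'a set)
    \<Rightarrow> (complex \<Rightarrow> 'b::real_normed_vector \<Rightarrow> 'b) \<Rightarrow> ('h \<Rightarrow> 'b set)
    \<Rightarrow> ('g \<Rightarrow> 'a \<Rightarrow> 'b) \<Rightarrow> bool" where
  "bundle_map G \<phi> scA A scB B T \<longleftrightarrow>
     (\<forall>g\<in>carrier G.
        (\<forall>a\<in>A g. T g a \<in> B (\<phi> g)) \<and>
        clinear_on scA scB (A g) (T g) \<and>
        (\<exists>K. \<forall>a\<in>A g. norm (T g a) \<le> K * norm a))"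

definition positive_definite ::
  "('g, 'gm) monoid_scheme \<Rightarrow> ('h, 'hm) monoid_scheme \<Rightarrow> ('g \<Rightarrow> 'h)
    \<Rightarrow> ('g \<Rightarrow> 'a::real_normed_vector set) \<Rightarrow> ('a \<Rightarrow> 'a \<Rightarrow> 'a) \<Rightarrow> ('a \<Rightarrow> 'a)
    \<Rightarrow> (complex \<Rightarrow> 'b::real_normed_vector \<Rightarrow> 'b) \<Rightarrow> ('h \<Rightarrow> 'b set) \<Rightarrow> ('b \<Rightarrow> 'b \<Rightarrow> 'b) \<Rightarrow> ('b \<Rightarrow> 'b)
    \<Rightarrow> ('g \<Rightarrow> 'a \<Rightarrow> 'b) \<Rightarrow> bool" where
  "positive_definite G H \<phi> A multA starA scB B multB starB T \<longleftrightarrow>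
     (\<forall>(n::nat) (gs::nat \<Rightarrow> 'g) as bs.
        (\<forall>i<n. gs i \<in> carrier G \<and> as i \<in> A (gs i) \<and> bs i \<in> B (\<phi> (gs i))) \<longrightarrow>
        positive_elem (B \<one>\<^bsub>H\<^esub>) scB multB starB
          (\<Sum>i<n. \<Sum>j<n. multB (multB (bs i)
               (T (inv\<^bsub>G\<^esub> (gs i) \<otimes>\<^bsub>G\<^esub> gs j) (multA (starA (as i)) (as j)))) (starB (bs j))))"

end

theory Submission
  imports Defs
begin

locale cs =
  fixes sc :: "complex \<Rightarrow> 'a::real_normed_vector \<Rightarrow> 'a"
  assumes cs: "complex_scaling sc"
begin

lemma sc_one[simp]: "sc 1 x = x" using cs unfolding complex_scaling_def by blast
lemma sc_mult[simp]: "sc c (sc d x) = sc (c * d) x" using cs unfolding complex_scaling_def by blast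
lemma sc_addc: "sc (c + d) x = sc c x + sc d x" using cs unfolding complex_scaling_def by blast
lemma sc_add: "sc c (x + y) = sc c x + sc c y" using cs unfolding complex_scaling_def by blast
lemma sc_real: "sc (complex_of_real r) x = r *\<^sub>R x" using cs unfolding complex_scaling_def by blast
lemma sc_norm: "norm (sc c x) = cmod c * norm x" using cs unfolding complex_scaling_def by blast
lemma sc_0c[simp]: "sc 0 x = 0" using sc_real[of 0 x] by simp
lemma sc_0[simp]: "sc c 0 = 0" using sc_add[of c 0 0] by simp
lemma sc_neg1: "sc (-1) x = - x" using sc_real[of "-1" x] by simp
lemma sc_uminus: "sc c (- x) = - sc c x"
  by (metis add.right_inverse add_left_imp_eq sc_0 sc_add)
lemma sc_uminusc: "sc (- c) x = - sc c x"
  by (metis add.right_inverse add_left_imp_eq sc_0c sc_addc)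
lemma sc_diff: "sc c (x - y) = sc c x - sc c y"
  by (metis diff_conv_add_uminus sc_add sc_uminus)
lemma sc_diffc: "sc (c - d) x = sc c x - sc d x"
  by (metis diff_conv_add_uminus sc_addc sc_uminusc)
lemma sc_num: "sc (numeral n) x = numeral n *\<^sub>R x"
  using sc_real[of "numeral n" x] by simp

lemma csub_zero: "csubspace sc S \<Longrightarrow> 0 \<in> S" unfolding csubspace_def by blast
lemma csub_add: "csubspace sc S \<Longrightarrow> x \<in> S \<Longrightarrow> y \<in> S \<Longrightarrow> x + y \<in> S" unfolding csubspace_def by blast
lemma csub_sc: "csubspace sc S \<Longrightarrow> x \<in> S \<Longrightarrow> sc c x \<in> S" unfolding csubspace_def by blast
lemma csub_uminus: "csubspace sc S \<Longrightarrow> x \<in> S \<Longrightarrow> - x \<in> S"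
  using csub_sc[of S x "-1"] sc_neg1 by simp
lemma csub_diff: "csubspace sc S \<Longrightarrow> x \<in> S \<Longrightarrow> y \<in> S \<Longrightarrow> x - y \<in> S"
  by (metis csub_add csub_uminus diff_conv_add_uminus)
lemma csub_scaleR: "csubspace sc S \<Longrightarrow> x \<in> S \<Longrightarrow> r *\<^sub>R x \<in> S"
  using csub_sc[of S x "complex_of_real r"] sc_real by simp
lemma csub_sum: "csubspace sc S \<Longrightarrow> (\<And>i. i \<in> I \<Longrightarrow> f i \<in> S) \<Longrightarrow> sum f I \<in> S"
proof (induction I rule: infinite_finite_induct)
  case (infinite A) then show ?case by (simp add: csub_zero)
next
  case empty then show ?case by (simp add: csub_zero)
next
  case (insert x F) then show ?case by (simp add: csub_add)
qed

end

locale fellb = cs sc for G :: "('g, 'gm) monoid_scheme" and sc :: "complex \<Rightarrow> 'a::real_normed_vector \<Rightarrow> 'a" and A mul star +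
  assumes grp: "group G" and fb: "fell_bundle G sc A mul star"
begin

lemma fib: "g \<in> carrier G \<Longrightarrow> csubspace sc (A g)"
  using fb unfolding fell_bundle_def banach_fibre_def by auto
lemma fib_complete: "g \<in> carrier G \<Longrightarrow> complete (A g)"
  using fb unfolding fell_bundle_def banach_fibre_def by auto
lemma mul_in: "g \<in> carrier G \<Longrightarrow> h \<in> carrier G \<Longrightarrow> a \<in> A g \<Longrightarrow> b \<in> A h \<Longrightarrow> mul a b \<in> A (g \<otimes>\<^bsub>G\<^esub> h)"
  using fb unfolding fell_bundle_def by auto
lemma mul_bil: "g \<in> carrier G \<Longrightarrow> h \<in> carrier G \<Longrightarrow> a \<in> A g \<Longrightarrow> a' \<in> A g \<Longrightarrow> b \<in> A h \<Longrightarrow> b' \<in> A h \<Longrightarrow>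
        mul (a + a') b = mul a b + mul a' b \<and>
        mul a (b + b') = mul a b + mul a b' \<and>
        mul (sc c a) b = sc c (mul a b) \<and>
        mul a (sc c b) = sc c (mul a b)"
  using fb unfolding fell_bundle_def by auto
lemma mul_assoc: "g \<in> carrier G \<Longrightarrow> h \<in> carrier G \<Longrightarrow> k \<in> carrier G \<Longrightarrow> a \<in> A g \<Longrightarrow> b \<in> A h \<Longrightarrow> c \<in> A k \<Longrightarrow>
        mul (mul a b) c = mul a (mul b c)"
  using fb unfolding fell_bundle_def by auto
lemma star_in: "g \<in> carrier G \<Longrightarrow> a \<in> A g \<Longrightarrow> star a \<in> A (inv\<^bsub>G\<^esub> g)"
  using fb unfolding fell_bundle_def by auto
lemma star_star: "g \<in> carrier G \<Longrightarrow> a \<in> A g \<Longrightarrow> star (star a) = a"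
  using fb unfolding fell_bundle_def by auto
lemma star_add: "g \<in> carrier G \<Longrightarrow> a \<in> A g \<Longrightarrow> a' \<in> A g \<Longrightarrow> star (a + a') = star a + star a'"
  using fb unfolding fell_bundle_def by auto
lemma star_sc: "g \<in> carrier G \<Longrightarrow> a \<in> A g \<Longrightarrow> star (sc c a) = sc (cnj c) (star a)"
  using fb unfolding fell_bundle_def by auto
lemma mul_norm: "g \<in> carrier G \<Longrightarrow> h \<in> carrier G \<Longrightarrow> a \<in> A g \<Longrightarrow> b \<in> A h \<Longrightarrow> norm (mul a b) \<le> norm a * norm b"
  using fb unfolding fell_bundle_def by auto
lemma star_mul: "g \<in> carrier G \<Longrightarrow> h \<in> carrier G \<Longrightarrow> a \<in> A g \<Longrightarrow> b \<in> A h \<Longrightarrow> star (mul a b) = mul (star b) (star a)"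
  using fb unfolding fell_bundle_def by auto
lemma cstar: "g \<in> carrier G \<Longrightarrow> a \<in> A g \<Longrightarrow> norm (mul (star a) a) = (norm a)\<^sup>2"
  using fb unfolding fell_bundle_def by auto

lemma inv_c: "g \<in> carrier G \<Longrightarrow> inv\<^bsub>G\<^esub> g \<in> carrier G"
  using grp by (simp add: group.inv_closed)

lemma norm_star_ge: assumes "g \<in> carrier G" "a \<in> A g" shows "norm a \<le> norm (star a)"
proof -
  have "(norm a)\<^sup>2 \<le> norm (star a) * norm a"
    using cstar[OF assms] mul_norm[OF inv_c[OF assms(1)] assms(1) star_in[OF assms] assms(2)] by simp
  then show ?thesis
    by (cases "norm a = 0") (auto simp: power2_eq_square)
qed

lemma norm_star: assumes "g \<in> carrier G" "a \<in> A g" shows "norm (star a) = norm a"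
  using norm_star_ge[OF assms] norm_star_ge[OF inv_c[OF assms(1)] star_in[OF assms]] star_star[OF assms]
  by simp

lemma mul_add_l: "g \<in> carrier G \<Longrightarrow> h \<in> carrier G \<Longrightarrow> a \<in> A g \<Longrightarrow> a' \<in> A g \<Longrightarrow> b \<in> A h \<Longrightarrow> mul (a + a') b = mul a b + mul a' b"
  using mul_bil[of g h a a' b b] by blast
lemma mul_add_r: "g \<in> carrier G \<Longrightarrow> h \<in> carrier G \<Longrightarrow> a \<in> A g \<Longrightarrow> b \<in> A h \<Longrightarrow> b' \<in> A h \<Longrightarrow> mul a (b + b') = mul a b + mul a b'"
  using mul_bil[of g h a a b b'] by blast
lemma mul_sc_l: "g \<in> carrier G \<Longrightarrow> h \<in> carrier G \<Longrightarrow> a \<in> A g \<Longrightarrow> b \<in> A h \<Longrightarrow> mul (sc c a) b = sc c (mul a b)"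
  using mul_bil[of g h a a b b] by blast
lemma mul_sc_r: "g \<in> carrier G \<Longrightarrow> h \<in> carrier G \<Longrightarrow> a \<in> A g \<Longrightarrow> b \<in> A h \<Longrightarrow> mul a (sc c b) = sc c (mul a b)"
  using mul_bil[of g h a a b b] by blast
lemma mul_diff_l: "g \<in> carrier G \<Longrightarrow> h \<in> carrier G \<Longrightarrow> a \<in> A g \<Longrightarrow> a' \<in> A g \<Longrightarrow> b \<in> A h \<Longrightarrow> mul (a - a') b = mul a b - mul a' b"
proof -
  assume as: "g \<in> carrier G" "h \<in> carrier G" "a \<in> A g" "a' \<in> A g" "b \<in> A h"
  have "a - a' = a + sc (-1) a'" by (simp add: sc_neg1)
  moreover have "sc (-1) a' \<in> A g" using as fib csub_sc by blast
  ultimately have "mul (a - a') b = mul a b + mul (sc (-1) a') b" using as mul_add_l[of g h a "sc (-1) a'" b] by metis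
  also have "\<dots> = mul a b - mul a' b" using as mul_sc_l[of g h a' b "-1"] by (simp add: sc_neg1)
  finally show ?thesis .
qed
lemma mul_diff_r: "g \<in> carrier G \<Longrightarrow> h \<in> carrier G \<Longrightarrow> a \<in> A g \<Longrightarrow> b \<in> A h \<Longrightarrow> b' \<in> A h \<Longrightarrow> mul a (b - b') = mul a b - mul a b'"
proof -
  assume as: "g \<in> carrier G" "h \<in> carrier G" "a \<in> A g" "b \<in> A h" "b' \<in> A h"
  have "b - b' = b + sc (-1) b'" by (simp add: sc_neg1)
  moreover have "sc (-1) b' \<in> A h" using as fib csub_sc by blast
  ultimately have "mul a (b - b') = mul a b + mul a (sc (-1) b')" using as mul_add_r[of g h a b "sc (-1) b'"] by metis
  also have "\<dots> = mul a b - mul a b'" using as mul_sc_r[of g h a b' "-1"] by (simp add: sc_neg1)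
  finally show ?thesis .
qed
lemma mul_scaleR_l: "g \<in> carrier G \<Longrightarrow> h \<in> carrier G \<Longrightarrow> a \<in> A g \<Longrightarrow> b \<in> A h \<Longrightarrow> mul (r *\<^sub>R a) b = r *\<^sub>R (mul a b)"
  using mul_sc_l[of g h a b "complex_of_real r"] by (simp add: sc_real)
lemma mul_scaleR_r: "g \<in> carrier G \<Longrightarrow> h \<in> carrier G \<Longrightarrow> a \<in> A g \<Longrightarrow> b \<in> A h \<Longrightarrow> mul a (r *\<^sub>R b) = r *\<^sub>R (mul a b)"
  using mul_sc_r[of g h a b "complex_of_real r"] by (simp add: sc_real)
lemma mul_0_l: "g \<in> carrier G \<Longrightarrow> h \<in> carrier G \<Longrightarrow> b \<in> A h \<Longrightarrow> mul 0 b = 0"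
  using mul_diff_l[of g h 0 0 b] fib csub_zero by auto
lemma mul_0_r: "g \<in> carrier G \<Longrightarrow> h \<in> carrier G \<Longrightarrow> a \<in> A g \<Longrightarrow> mul a 0 = 0"
  using mul_diff_r[of g h a 0 0] fib csub_zero by auto
lemma star_diff: "g \<in> carrier G \<Longrightarrow> a \<in> A g \<Longrightarrow> a' \<in> A g \<Longrightarrow> star (a - a') = star a - star a'"
proof -
  assume as: "g \<in> carrier G" "a \<in> A g" "a' \<in> A g"
  have "a - a' = a + sc (-1) a'" by (simp add: sc_neg1)
  moreover have "sc (-1) a' \<in> A g" using as fib csub_sc by blast
  ultimately have "star (a - a') = star a + star (sc (-1) a')" using as star_add[of g a "sc (-1) a'"] by metis
  also have "\<dots> = star a - star a'" using as star_sc[of g a' "-1"] by (simp add: sc_neg1)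
  finally show ?thesis .
qed
lemma star_0: "g \<in> carrier G \<Longrightarrow> star 0 = 0"
  using star_diff[of g 0 0] fib csub_zero by auto
lemma star_scaleR: "g \<in> carrier G \<Longrightarrow> a \<in> A g \<Longrightarrow> star (r *\<^sub>R a) = r *\<^sub>R star a"
  using star_sc[of g a "complex_of_real r"] by (simp add: sc_real)

end


locale P53 =
  A: fellb G scA A multA starA + B: fellb H scB B multB starB
  for G :: "('g, 'gm) monoid_scheme" and scA :: "complex \<Rightarrow> 'a::real_normed_vector \<Rightarrow> 'a" and A multA starA
  and H :: "('h, 'hm) monoid_scheme" and scB :: "complex \<Rightarrow> 'b::real_normed_vector \<Rightarrow> 'b" and B multB starB +
  fixes \<phi> :: "'g \<Rightarrow> 'h" and scX :: "complex \<Rightarrow> 'x::real_normed_vector \<Rightarrow> 'x" and X rmul ip rho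
  assumes hom: "\<phi> \<in> hom G H"
    and hb: "hilbert_bundle H scB B multB starB scX X rmul ip"
    and act: "bundle_action G H \<phi> scA A multA starA scX X rmul ip B rho"

sublocale P53 \<subseteq> CX: cs scX
  using hb unfolding hilbert_bundle_def by (unfold_locales) auto

sublocale P53 \<subseteq> GG: group G by (rule A.grp)
sublocale P53 \<subseteq> HH: group H by (rule B.grp)
sublocale P53 \<subseteq> PH: group_hom G H \<phi> by unfold_locales (rule hom)

context P53
begin

lemma X_fib: "r \<in> carrier H \<Longrightarrow> csubspace scX (X r)"
  using hb unfolding hilbert_bundle_def banach_fibre_def by auto
lemma rmul_in: "r \<in> carrier H \<Longrightarrow> s \<in> carrier H \<Longrightarrow> x \<in> X r \<Longrightarrow> b \<in> B s \<Longrightarrow> rmul x b \<in> X (r \<otimes>\<^bsub>H\<^esub> s)"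
  using hb unfolding hilbert_bundle_def by auto
lemma rmul_bil: "r \<in> carrier H \<Longrightarrow> s \<in> carrier H \<Longrightarrow> x \<in> X r \<Longrightarrow> x' \<in> X r \<Longrightarrow> b \<in> B s \<Longrightarrow> b' \<in> B s \<Longrightarrow>
        rmul (x + x') b = rmul x b + rmul x' b \<and>
        rmul x (b + b') = rmul x b + rmul x b' \<and>
        rmul (scX c x) b = scX c (rmul x b) \<and>
        rmul x (scB c b) = scX c (rmul x b)"
  using hb unfolding hilbert_bundle_def by auto
lemma ip_in: "r \<in> carrier H \<Longrightarrow> s \<in> carrier H \<Longrightarrow> x \<in> X r \<Longrightarrow> y \<in> X s \<Longrightarrow> ip x y \<in> B (inv\<^bsub>H\<^esub> r \<otimes>\<^bsub>H\<^esub> s)"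
  using hb unfolding hilbert_bundle_def by auto
lemma ip_add_r: "r \<in> carrier H \<Longrightarrow> s \<in> carrier H \<Longrightarrow> x \<in> X r \<Longrightarrow> y \<in> X s \<Longrightarrow> y' \<in> X s \<Longrightarrow> ip x (y + y') = ip x y + ip x y'"
  using hb unfolding hilbert_bundle_def by auto
lemma ip_sc_r: "r \<in> carrier H \<Longrightarrow> s \<in> carrier H \<Longrightarrow> x \<in> X r \<Longrightarrow> y \<in> X s \<Longrightarrow> ip x (scX c y) = scB c (ip x y)"
  using hb unfolding hilbert_bundle_def by auto
lemma ip_rmul: "r \<in> carrier H \<Longrightarrow> s \<in> carrier H \<Longrightarrow> t \<in> carrier H \<Longrightarrow> x \<in> X r \<Longrightarrow> y \<in> X s \<Longrightarrow> b \<in> B t \<Longrightarrow>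
        ip x (rmul y b) = multB (ip x y) b"
  using hb unfolding hilbert_bundle_def by auto
lemma ip_star: "r \<in> carrier H \<Longrightarrow> s \<in> carrier H \<Longrightarrow> x \<in> X r \<Longrightarrow> y \<in> X s \<Longrightarrow> starB (ip x y) = ip y x"
  using hb unfolding hilbert_bundle_def by auto
lemma ip_pos: "r \<in> carrier H \<Longrightarrow> x \<in> X r \<Longrightarrow> positive_elem (B \<one>\<^bsub>H\<^esub>) scB multB starB (ip x x)"
  using hb unfolding hilbert_bundle_def by auto
lemma ip_norm: "r \<in> carrier H \<Longrightarrow> x \<in> X r \<Longrightarrow> norm x = sqrt (norm (ip x x))"
  using hb unfolding hilbert_bundle_def by auto

lemma rho_in: "g \<in> carrier G \<Longrightarrow> h \<in> carrier H \<Longrightarrow> a \<in> A g \<Longrightarrow> x \<in> X h \<Longrightarrow> rho a x \<in> X (\<phi> g \<otimes>\<^bsub>H\<^esub> h)"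
  using act unfolding bundle_action_def by auto
lemma rho_lin: "g \<in> carrier G \<Longrightarrow> h \<in> carrier H \<Longrightarrow> a \<in> A g \<Longrightarrow> a' \<in> A g \<Longrightarrow> x \<in> X h \<Longrightarrow> x' \<in> X h \<Longrightarrow>
        rho (a + a') x = rho a x + rho a' x \<and>
        rho a (x + x') = rho a x + rho a x' \<and>
        rho (scA c a) x = scX c (rho a x) \<and>
        rho a (scX c x) = scX c (rho a x)"
  using act unfolding bundle_action_def by auto
lemma rho_mul: "g \<in> carrier G \<Longrightarrow> g' \<in> carrier G \<Longrightarrow> a \<in> A g \<Longrightarrow> a' \<in> A g' \<Longrightarrow> h \<in> carrier H \<Longrightarrow> x \<in> X h \<Longrightarrow>
        rho (multA a a') x = rho a (rho a' x)"
  using act unfolding bundle_action_def by auto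
lemma ip_rho: "g \<in> carrier G \<Longrightarrow> a \<in> A g \<Longrightarrow> r \<in> carrier H \<Longrightarrow> s \<in> carrier H \<Longrightarrow> x \<in> X r \<Longrightarrow> y \<in> X s \<Longrightarrow>
        ip (rho a x) y = ip x (rho (starA a) y)"
  using act unfolding bundle_action_def by auto

lemma rho_add_l: "g \<in> carrier G \<Longrightarrow> h \<in> carrier H \<Longrightarrow> a \<in> A g \<Longrightarrow> a' \<in> A g \<Longrightarrow> x \<in> X h \<Longrightarrow> rho (a + a') x = rho a x + rho a' x"
  using rho_lin[of g h a a' x x] by blast
lemma rho_add_r: "g \<in> carrier G \<Longrightarrow> h \<in> carrier H \<Longrightarrow> a \<in> A g \<Longrightarrow> x \<in> X h \<Longrightarrow> x' \<in> X h \<Longrightarrow> rho a (x + x') = rho a x + rho a x'"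
  using rho_lin[of g h a a x x'] by blast
lemma rho_sc_l: "g \<in> carrier G \<Longrightarrow> h \<in> carrier H \<Longrightarrow> a \<in> A g \<Longrightarrow> x \<in> X h \<Longrightarrow> rho (scA c a) x = scX c (rho a x)"
  using rho_lin[of g h a a x x] by blast
lemma rho_sc_r: "g \<in> carrier G \<Longrightarrow> h \<in> carrier H \<Longrightarrow> a \<in> A g \<Longrightarrow> x \<in> X h \<Longrightarrow> rho a (scX c x) = scX c (rho a x)"
  using rho_lin[of g h a a x x] by blast
lemma rho_diff_l: assumes "g \<in> carrier G" "h \<in> carrier H" "a \<in> A g" "a' \<in> A g" "x \<in> X h"
  shows "rho (a - a') x = rho a x - rho a' x"
proof -
  have "a - a' = a + scA (-1) a'" by (simp add: A.sc_neg1)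
  moreover have "scA (-1) a' \<in> A g" using assms A.fib A.csub_sc by blast
  ultimately have "rho (a - a') x = rho a x + rho (scA (-1) a') x" using assms rho_add_l[of g h a "scA (-1) a'" x] by metis
  also have "\<dots> = rho a x - rho a' x" using assms rho_sc_l[of g h a' x "-1"] by (simp add: CX.sc_neg1)
  finally show ?thesis .
qed
lemma rho_diff_r: assumes "g \<in> carrier G" "h \<in> carrier H" "a \<in> A g" "x \<in> X h" "x' \<in> X h"
  shows "rho a (x - x') = rho a x - rho a x'"
proof -
  have "x - x' = x + scX (-1) x'" by (simp add: CX.sc_neg1)
  moreover have "scX (-1) x' \<in> X h" using assms X_fib CX.csub_sc by blast
  ultimately have "rho a (x - x') = rho a x + rho a (scX (-1) x')" using assms rho_add_r[of g h a x "scX (-1) x'"] by metis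
  also have "\<dots> = rho a x - rho a x'" using assms rho_sc_r[of g h a x' "-1"] by (simp add: CX.sc_neg1)
  finally show ?thesis .
qed
lemma rho_0_l: "g \<in> carrier G \<Longrightarrow> h \<in> carrier H \<Longrightarrow> x \<in> X h \<Longrightarrow> rho 0 x = 0"
  using rho_diff_l[of g h 0 0 x] A.fib A.csub_zero by fastforce

lemma rmul_add_l: "r \<in> carrier H \<Longrightarrow> s \<in> carrier H \<Longrightarrow> x \<in> X r \<Longrightarrow> x' \<in> X r \<Longrightarrow> b \<in> B s \<Longrightarrow> rmul (x + x') b = rmul x b + rmul x' b"
  using rmul_bil[of r s x x' b b] by blast

lemma ip_add_l: assumes "r \<in> carrier H" "s \<in> carrier H" "x \<in> X r" "x' \<in> X r" "y \<in> X s"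
  shows "ip (x + x') y = ip x y + ip x' y"
proof -
  have xx: "x + x' \<in> X r" using assms X_fib CX.csub_add by blast
  have "ip (x + x') y = starB (ip y (x + x'))" using ip_star[OF assms(2,1,5) xx] by simp
  also have "\<dots> = starB (ip y x + ip y x')" using ip_add_r[OF assms(2,1,5,3,4)] by simp
  also have "\<dots> = starB (ip y x) + starB (ip y x')"
    by (rule B.star_add[OF _ ip_in[OF assms(2,1,5,3)] ip_in[OF assms(2,1,5,4)]]) (use assms in auto)
  also have "\<dots> = ip x y + ip x' y" using ip_star assms by simp
  finally show ?thesis .
qed
lemma ip_sc_l: assumes "r \<in> carrier H" "s \<in> carrier H" "x \<in> X r" "y \<in> X s"
  shows "ip (scX c x) y = scB (cnj c) (ip x y)"
proof -
  have xx: "scX c x \<in> X r" using assms X_fib CX.csub_sc by blast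
  have "ip (scX c x) y = starB (ip y (scX c x))" using ip_star[OF assms(2,1,4) xx] by simp
  also have "\<dots> = starB (scB c (ip y x))" using ip_sc_r[OF assms(2,1,4,3)] by simp
  also have "\<dots> = scB (cnj c) (starB (ip y x))"
    by (rule B.star_sc[OF _ ip_in[OF assms(2,1,4,3)]]) (use assms in auto)
  also have "\<dots> = scB (cnj c) (ip x y)" using ip_star assms by simp
  finally show ?thesis .
qed
lemma ip_0_r: "r \<in> carrier H \<Longrightarrow> s \<in> carrier H \<Longrightarrow> x \<in> X r \<Longrightarrow> ip x 0 = 0"
  using ip_sc_r[of r s x 0 0] X_fib[of s] CX.csub_zero by fastforce
lemma ip_0_l: "r \<in> carrier H \<Longrightarrow> s \<in> carrier H \<Longrightarrow> y \<in> X s \<Longrightarrow> ip 0 y = 0"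
  using ip_sc_l[of r s 0 y 0] X_fib[of r] CX.csub_zero by fastforce
lemma ip_scaleR_l: "r \<in> carrier H \<Longrightarrow> s \<in> carrier H \<Longrightarrow> x \<in> X r \<Longrightarrow> y \<in> X s \<Longrightarrow> ip (t *\<^sub>R x) y = t *\<^sub>R ip x y"
  using ip_sc_l[of r s x y "complex_of_real t"] by (simp add: CX.sc_real B.sc_real)
lemma ip_scaleR_r: "r \<in> carrier H \<Longrightarrow> s \<in> carrier H \<Longrightarrow> x \<in> X r \<Longrightarrow> y \<in> X s \<Longrightarrow> ip x (t *\<^sub>R y) = t *\<^sub>R ip x y"
  using ip_sc_r[of r s x y "complex_of_real t"] by (simp add: CX.sc_real B.sc_real)
lemma ip_diff_r: assumes "r \<in> carrier H" "s \<in> carrier H" "x \<in> X r" "y \<in> X s" "y' \<in> X s"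
  shows "ip x (y - y') = ip x y - ip x y'"
proof -
  have "y - y' = y + (-1) *\<^sub>R y'" by simp
  moreover have "(-1) *\<^sub>R y' \<in> X s" using assms X_fib CX.csub_scaleR by blast
  ultimately have "ip x (y - y') = ip x y + ip x ((-1) *\<^sub>R y')" using assms ip_add_r[of r s x y "(-1) *\<^sub>R y'"] by metis
  also have "\<dots> = ip x y - ip x y'" using assms ip_scaleR_r[of r s x y' "-1"] by simp
  finally show ?thesis .
qed
lemma ip_diff_l: assumes "r \<in> carrier H" "s \<in> carrier H" "x \<in> X r" "x' \<in> X r" "y \<in> X s"
  shows "ip (x - x') y = ip x y - ip x' y"
proof -
  have "x - x' = x + (-1) *\<^sub>R x'" by simp
  moreover have "(-1) *\<^sub>R x' \<in> X r" using assms X_fib CX.csub_scaleR by blast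
  ultimately have "ip (x - x') y = ip x y + ip ((-1) *\<^sub>R x') y" using assms ip_add_l[of r s x "(-1) *\<^sub>R x'" y] by metis
  also have "\<dots> = ip x y - ip x' y" using assms ip_scaleR_l[of r s x' y "-1"] by simp
  finally show ?thesis .
qed
lemma norm_sq: "r \<in> carrier H \<Longrightarrow> x \<in> X r \<Longrightarrow> (norm x)\<^sup>2 = norm (ip x x)"
  using ip_norm[of r x] by simp

lemma ip_rmul_l: assumes "r \<in> carrier H" "s \<in> carrier H" "t \<in> carrier H" "x \<in> X r" "y \<in> X s" "b \<in> B t"
  shows "ip (rmul x b) y = multB (starB b) (ip x y)"
proof -
  have xb: "rmul x b \<in> X (r \<otimes>\<^bsub>H\<^esub> t)" using rmul_in assms by blast
  have "ip (rmul x b) y = starB (ip y (rmul x b))" using ip_star[OF assms(2) _ assms(5) xb] assms by simp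
  also have "\<dots> = starB (multB (ip y x) b)" using ip_rmul assms by simp
  also have "\<dots> = multB (starB b) (starB (ip y x))"
    by (rule B.star_mul[OF _ assms(3) ip_in[OF assms(2,1,5,4)] assms(6)]) (use assms in auto)
  also have "\<dots> = multB (starB b) (ip x y)" using ip_star assms by simp
  finally show ?thesis .
qed

end


context cs begin
lemma polar: "(p + sc 1 q + sc (cnj 1) r + sc (cnj 1 * 1) s) - (p + sc (-1) q + sc (cnj (-1)) r + sc (cnj (-1) * (-1)) s)
   + sc (-\<i>) ((p + sc \<i> q + sc (cnj \<i>) r + sc (cnj \<i> * \<i>) s) - (p + sc (-\<i>) q + sc (cnj (-\<i>)) r + sc (cnj (-\<i>) * (-\<i>)) s))
   = q + q + q + q"
proof -
  have e1: "sc (-\<i>) (sc \<i> q) = q" by simp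
  have e2: "sc (-\<i>) (sc (-\<i>) r) = - r" by (simp add: sc_neg1)
  have e3: "sc (-\<i>) (sc (-\<i>) q) = - q" by (simp add: sc_neg1)
  have e4: "sc (-\<i>) (sc \<i> r) = r" by simp
  show ?thesis
    by (simp add: sc_add sc_diff sc_neg1 sc_uminus sc_uminusc e1 e2 e3 e4 algebra_simps scaleR_2 flip: scaleR_add_left)
qed
end
lemma four_sR: "(4::real) *\<^sub>R q = q + q + q + q" for q :: "'a::real_vector"
proof -
  have "(4::real) *\<^sub>R q = (2 + 2) *\<^sub>R q" by simp
  also have "\<dots> = 2 *\<^sub>R q + 2 *\<^sub>R q" by (rule scaleR_left_distrib)
  also have "\<dots> = q + q + q + q" by (simp only: scaleR_2 add.assoc)
  finally show ?thesis .
qed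

context P53 begin

lemma ip_expand: assumes r: "r \<in> carrier H" and uv: "u \<in> X r" "v \<in> X r"
  shows "ip (u + scX c v) (u + scX c v) = ip u u + scB c (ip u v) + scB (cnj c) (ip v u) + scB (cnj c * c) (ip v v)"
proof -
  have w: "scX c v \<in> X r" using uv r X_fib CX.csub_sc by blast
  have uw: "u + scX c v \<in> X r" using uv w r X_fib CX.csub_add by blast
  have "ip (u + scX c v) (u + scX c v) = ip u (u + scX c v) + ip (scX c v) (u + scX c v)"
    using ip_add_l[OF r r uv(1) w uw] .
  also have "\<dots> = ip u u + ip u (scX c v) + (ip (scX c v) u + ip (scX c v) (scX c v))"
    using ip_add_r[OF r r uv(1) uv(1) w] ip_add_r[OF r r w uv(1) w] by simp
  also have "\<dots> = ip u u + scB c (ip u v) + scB (cnj c) (ip v u) + scB (cnj c * c) (ip v v)"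
    using ip_sc_r[OF r r uv(1) uv(2)] ip_sc_l[OF r r uv(2) uv(1)] ip_sc_l[OF r r uv(2) w] ip_sc_r[OF r r uv(2) uv(2)]
    by (simp add: add.assoc)
  finally show ?thesis .
qed

lemma norm_comb: assumes r: "r \<in> carrier H" and uv: "u \<in> X r" "v \<in> X r" and c: "cmod c = 1"
  shows "norm (ip (u + scX c v) (u + scX c v)) \<le> (norm u + norm v)\<^sup>2"
proof -
  have w: "scX c v \<in> X r" using uv r X_fib CX.csub_sc by blast
  have uw: "u + scX c v \<in> X r" using uv w r X_fib CX.csub_add by blast
  have "norm (u + scX c v) \<le> norm u + norm v"
    using norm_triangle_ineq[of u "scX c v"] CX.sc_norm[of c v] c by simp
  then have "(norm (u + scX c v))\<^sup>2 \<le> (norm u + norm v)\<^sup>2"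
    by (simp add: power_mono)
  then show ?thesis using norm_sq[OF r uw] by simp
qed

lemma cs_raw: assumes r: "r \<in> carrier H" and uv: "u \<in> X r" "v \<in> X r"
  shows "norm (ip u v) \<le> (norm u + norm v)\<^sup>2"
proof -
  define E where "E c = ip (u + scX c v) (u + scX c v)" for c
  have EE: "E c = ip u u + scB c (ip u v) + scB (cnj c) (ip v u) + scB (cnj c * c) (ip v v)" for c
    unfolding E_def using ip_expand[OF r uv] .
  have "E 1 - E (-1) + scB (-\<i>) (E \<i> - E (-\<i>)) = ip u v + ip u v + ip u v + ip u v"
    unfolding EE by (rule B.polar)
  then have "4 *\<^sub>R ip u v = E 1 - E (-1) + scB (-\<i>) (E \<i> - E (-\<i>))"
    by (metis four_sR)
  then have "norm (4 *\<^sub>R ip u v) \<le> norm (E 1 - E (-1)) + norm (scB (-\<i>) (E \<i> - E (-\<i>)))"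
    by (metis norm_triangle_ineq)
  also have "\<dots> \<le> norm (E 1) + norm (E (-1)) + (norm (E \<i>) + norm (E (-\<i>)))"
    using norm_triangle_ineq4[of "E 1" "E (-1)"] norm_triangle_ineq4[of "E \<i>" "E (-\<i>)"]
    by (simp add: B.sc_norm)
  also have "\<dots> \<le> 4 * (norm u + norm v)\<^sup>2"
    using norm_comb[OF r uv, of 1] norm_comb[OF r uv, of "-1"] norm_comb[OF r uv, of "\<i>"] norm_comb[OF r uv, of "-\<i>"]
    unfolding E_def by simp
  finally show ?thesis by simp
qed

lemma cs_same: assumes r: "r \<in> carrier H" and uv: "u \<in> X r" "v \<in> X r"
  shows "norm (ip u v) \<le> 4 * norm u * norm v"
proof (cases "u = 0 \<or> v = 0")
  case True
  then show ?thesis using ip_0_l[OF r r] ip_0_r[OF r r] uv by auto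
next
  case False
  then have pu: "norm u > 0" and pv: "norm v > 0" by auto
  define t where "t = sqrt (norm v / norm u)"
  have tp: "t > 0" using pu pv t_def by simp
  have t2: "t\<^sup>2 = norm v / norm u" unfolding t_def using pu pv by simp
  have "t * norm u = sqrt (norm v / norm u) * sqrt ((norm u)\<^sup>2)" unfolding t_def by simp
  also have "\<dots> = sqrt (norm v / norm u * (norm u)\<^sup>2)" by (simp only: real_sqrt_mult)
  also have "\<dots> = sqrt (norm u * norm v)" using pu by (simp add: power2_eq_square)
  finally have tu: "t * norm u = sqrt (norm u * norm v)" .
  have "norm v / t = t * norm u" using tp pu t2 by (simp add: field_simps power2_eq_square)
  then have tv: "norm v / t = sqrt (norm u * norm v)" using tu by simp
  have u': "t *\<^sub>R u \<in> X r" and v': "(1/t) *\<^sub>R v \<in> X r" using uv r X_fib CX.csub_scaleR by blast+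
  have "ip (t *\<^sub>R u) ((1/t) *\<^sub>R v) = ip u v"
    using ip_scaleR_l[OF r r uv(1) v'] ip_scaleR_r[OF r r uv] tp by simp
  then have "norm (ip u v) \<le> (norm (t *\<^sub>R u) + norm ((1/t) *\<^sub>R v))\<^sup>2"
    using cs_raw[OF r u' v'] by simp
  also have "\<dots> = (2 * sqrt (norm u * norm v))\<^sup>2" using tu tv tp by simp
  also have "\<dots> = 4 * norm u * norm v" by (simp add: power_mult_distrib)
  finally show ?thesis .
qed

end

context P53 begin

lemma inv_cancel_H: "r \<in> carrier H \<Longrightarrow> s \<in> carrier H \<Longrightarrow> r \<otimes>\<^bsub>H\<^esub> (inv\<^bsub>H\<^esub> r \<otimes>\<^bsub>H\<^esub> s) = s"
  by (simp add: HH.m_assoc[symmetric])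

lemma rmul_norm: assumes r: "r \<in> carrier H" and t: "t \<in> carrier H" and x: "x \<in> X r" and b: "b \<in> B t"
  shows "norm (rmul x b) \<le> norm x * norm b"
proof -
  have rt: "r \<otimes>\<^bsub>H\<^esub> t \<in> carrier H" using r t by simp
  have xb: "rmul x b \<in> X (r \<otimes>\<^bsub>H\<^esub> t)" using rmul_in[OF r t x b] .
  have ipxx: "ip x x \<in> B (inv\<^bsub>H\<^esub> r \<otimes>\<^bsub>H\<^esub> r)" using ip_in[OF r r x x] .
  have sb: "starB b \<in> B (inv\<^bsub>H\<^esub> t)" using B.star_in[OF t b] .
  have "ip (rmul x b) (rmul x b) = multB (ip (rmul x b) x) b"
    using ip_rmul[OF rt r t xb x b] .
  also have "\<dots> = multB (multB (starB b) (ip x x)) b"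
    using ip_rmul_l[OF r r t x x b] by simp
  finally have e: "ip (rmul x b) (rmul x b) = multB (multB (starB b) (ip x x)) b" .
  have m1: "multB (starB b) (ip x x) \<in> B (inv\<^bsub>H\<^esub> t \<otimes>\<^bsub>H\<^esub> (inv\<^bsub>H\<^esub> r \<otimes>\<^bsub>H\<^esub> r))"
    using B.mul_in[OF _ _ sb ipxx] r t by simp
  have "norm (multB (multB (starB b) (ip x x)) b) \<le> norm (multB (starB b) (ip x x)) * norm b"
    using B.mul_norm[OF _ t m1 b] r t by simp
  also have "\<dots> \<le> (norm (starB b) * norm (ip x x)) * norm b"
    using B.mul_norm[OF _ _ sb ipxx] r t by (simp add: mult_right_mono)
  also have "\<dots> = (norm x * norm b)\<^sup>2"
    using B.norm_star[OF t b] norm_sq[OF r x] by (simp add: power2_eq_square)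
  finally have "(norm (rmul x b))\<^sup>2 \<le> (norm x * norm b)\<^sup>2"
    using norm_sq[OF rt xb] e by simp
  then show ?thesis by (rule power2_le_imp_le) simp
qed

lemma cs_gen: assumes r: "r \<in> carrier H" and s: "s \<in> carrier H" and x: "x \<in> X r" and y: "y \<in> X s"
  shows "norm (ip x y) \<le> 4 * norm x * norm y"
proof -
  define b where "b = ip x y"
  define k where "k = inv\<^bsub>H\<^esub> r \<otimes>\<^bsub>H\<^esub> s"
  have k: "k \<in> carrier H" using r s k_def by simp
  have b: "b \<in> B k" using ip_in[OF r s x y] b_def k_def by simp
  have xb: "rmul x b \<in> X s" using rmul_in[OF r k x b] inv_cancel_H[OF r s] k_def by simp
  have "ip y (rmul x b) = multB (ip y x) b" using ip_rmul[OF s r k y x b] .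
  also have "\<dots> = multB (starB b) b" using ip_star[OF r s x y] b_def by simp
  finally have e: "ip y (rmul x b) = multB (starB b) b" .
  have "(norm b)\<^sup>2 = norm (ip y (rmul x b))" using B.cstar[OF k b] e by simp
  also have "\<dots> \<le> 4 * norm y * norm (rmul x b)" using cs_same[OF s y xb] .
  also have "\<dots> \<le> 4 * norm y * (norm x * norm b)"
    using rmul_norm[OF r k x b] by (simp add: mult_left_mono)
  finally have "norm b * norm b \<le> (4 * norm x * norm y) * norm b" by (simp add: power2_eq_square algebra_simps)
  then show ?thesis unfolding b_def
    by (cases "norm (ip x y) = 0") (auto simp: b_def)
qed

end

lemma lim_bound:
  fixes f :: "nat \<Rightarrow> 'a::real_normed_vector" and g :: "nat \<Rightarrow> 'b::real_normed_vector"
  assumes "f \<longlonglongrightarrow> l" "\<And>n. norm (g n - L) \<le> K * norm (f n - l)"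
  shows "g \<longlonglongrightarrow> L"
proof -
  have "(\<lambda>n. norm (f n - l)) \<longlonglongrightarrow> 0"
    using assms(1) by (simp add: LIM_zero tendsto_norm_zero)
  then have "(\<lambda>n. K * norm (f n - l)) \<longlonglongrightarrow> 0"
    by (rule tendsto_mult_right_zero)
  then have "(\<lambda>n. g n - L) \<longlonglongrightarrow> 0"
    by (rule Lim_null_comparison[rotated]) (use assms(2) in auto)
  then show ?thesis by (rule LIM_zero_cancel)
qed

sublocale fellb \<subseteq> GRP: group G by (rule grp)

context fellb begin

lemma sqrt_exists:
  assumes h: "h \<in> A \<one>\<^bsub>G\<^esub>" and hs: "star h = h" and hn: "norm h \<le> 1/2"
  shows "\<exists>e \<in> A \<one>\<^bsub>G\<^esub>. star e = e \<and> mul e h = mul h e \<and> e = (-1/2) *\<^sub>R (mul h h + mul e e)"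
proof -
  let ?o = "\<one>\<^bsub>G\<^esub>"
  have o: "?o \<in> carrier G" by simp
  have oo: "?o \<otimes>\<^bsub>G\<^esub> ?o = ?o" by simp
  have mulo: "mul a b \<in> A ?o" if "a \<in> A ?o" "b \<in> A ?o" for a b
    using mul_in[OF o o that] oo by simp
  have hh: "mul h h \<in> A ?o" using mulo h by simp
  have hhn: "norm (mul h h) \<le> 1/4"
  proof -
    have "norm (mul h h) \<le> norm h * norm h" using mul_norm[OF o o h h] .
    also have "\<dots> \<le> (1/2) * (1/2)" using hn by (intro mult_mono) auto
    finally show ?thesis by simp
  qed
  define S where "S = {e \<in> A ?o. norm e \<le> 1/2 \<and> mul e h = mul h e}"
  define F where "F e = (-1/2) *\<^sub>R (mul h h + mul e e)" for e
  have FA: "F e \<in> A ?o" if "e \<in> A ?o" for e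
    unfolding F_def using that hh mulo fib[OF o] csub_add csub_scaleR by blast
  have S0: "0 \<in> S" unfolding S_def using fib[OF o] csub_zero mul_0_l[OF o o h] mul_0_r[OF o o h] by auto
  have FS: "F ` S \<subseteq> S"
  proof
    fix y assume "y \<in> F ` S"
    then obtain e where e: "e \<in> S" and y: "y = F e" by blast
    have eA: "e \<in> A ?o" and en: "norm e \<le> 1/2" and ec: "mul e h = mul h e" using e S_def by auto
    have ee: "mul e e \<in> A ?o" using mulo eA by simp
    have "norm (mul e e) \<le> (1/2) * (1/2)"
    proof -
      have "norm (mul e e) \<le> norm e * norm e" using mul_norm[OF o o eA eA] .
      also have "\<dots> \<le> (1/2) * (1/2)" using en by (intro mult_mono) auto
      finally show ?thesis .
    qed
    then have "norm (F e) \<le> 1/2"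
      unfolding F_def using hhn norm_triangle_ineq[of "mul h h" "mul e e"] by simp
    moreover have "mul (F e) h = mul h (F e)"
    proof -
      have z: "mul h h + mul e e \<in> A ?o" using hh ee fib[OF o] csub_add by blast
      have "mul (F e) h = (-1/2) *\<^sub>R mul (mul h h + mul e e) h" unfolding F_def by (rule mul_scaleR_l[OF o o z h])
      also have "\<dots> = (-1/2) *\<^sub>R (mul (mul h h) h + mul (mul e e) h)" using mul_add_l[OF o o hh ee h] by simp
      also have "mul (mul e e) h = mul h (mul e e)"
      proof -
        have "mul (mul e e) h = mul e (mul e h)" using mul_assoc[OF o o o eA eA h] .
        also have "\<dots> = mul e (mul h e)" using ec by simp
        also have "\<dots> = mul (mul e h) e" using mul_assoc[OF o o o eA h eA] by simp
        also have "\<dots> = mul (mul h e) e" using ec by simp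
        also have "\<dots> = mul h (mul e e)" using mul_assoc[OF o o o h eA eA] .
        finally show ?thesis .
      qed
      also have "mul (mul h h) h = mul h (mul h h)" using mul_assoc[OF o o o h h h] .
      also have "(-1/2) *\<^sub>R (mul h (mul h h) + mul h (mul e e)) = (-1/2) *\<^sub>R mul h (mul h h + mul e e)"
        using mul_add_r[OF o o h hh ee] by simp
      also have "\<dots> = mul h (F e)" unfolding F_def by (rule mul_scaleR_r[OF o o h z, symmetric])
      finally show ?thesis .
    qed
    ultimately show "y \<in> S" using y FA eA S_def by auto
  qed
  have lip: "dist (F x) (F y) \<le> (1/2) * dist x y" if "x \<in> S" "y \<in> S" for x y
  proof -
    have xA: "x \<in> A ?o" and xn: "norm x \<le> 1/2" and yA: "y \<in> A ?o" and yn: "norm y \<le> 1/2"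
      using that S_def by auto
    have dxy: "x - y \<in> A ?o" using xA yA fib[OF o] csub_diff by blast
    have "mul x x - mul y y = mul x (x - y) + mul (x - y) y"
      using mul_diff_r[OF o o xA xA yA] mul_diff_l[OF o o xA yA yA] by simp
    then have "norm (mul x x - mul y y) \<le> norm x * norm (x - y) + norm (x - y) * norm y"
      using mul_norm[OF o o xA dxy] mul_norm[OF o o dxy yA] norm_triangle_ineq[of "mul x (x - y)" "mul (x - y) y"]
      by simp
    also have "\<dots> \<le> (1/2) * norm (x - y) + norm (x - y) * (1/2)"
      using xn yn by (intro add_mono mult_right_mono mult_left_mono) auto
    finally have n: "norm (mul x x - mul y y) \<le> norm (x - y)" by simp
    have "F x - F y = (-1/2) *\<^sub>R (mul x x - mul y y)" unfolding F_def by (simp add: algebra_simps)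
    then have "dist (F x) (F y) = (1/2) * norm (mul x x - mul y y)" by (simp add: dist_norm)
    also have "\<dots> \<le> (1/2) * dist x y" using n by (simp add: dist_norm)
    finally show ?thesis .
  qed
  have cS: "complete S"
  proof (rule completeI)
    fix f assume fS: "\<forall>n. f n \<in> S" and cf: "Cauchy f"
    have fA: "\<forall>n. f n \<in> A ?o" using fS S_def by auto
    obtain l where lA: "l \<in> A ?o" and fl: "f \<longlonglongrightarrow> l"
      using completeE[OF fib_complete[OF o] fA cf] by blast
    have "norm l \<le> 1/2"
      using tendsto_norm[OF fl] fS S_def by (intro LIMSEQ_le_const2[of "\<lambda>n. norm (f n)"]) auto
    moreover have "mul l h = mul h l"
    proof -
      have lim: "(\<lambda>n. mul (f n) h - mul h (f n)) \<longlonglongrightarrow> mul l h - mul h l"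
      proof (rule lim_bound[OF fl])
        fix n
        have d: "f n - l \<in> A ?o" using fA lA fib[OF o] csub_diff by blast
        have "mul (f n) h - mul h (f n) - (mul l h - mul h l) = mul (f n - l) h - mul h (f n - l)"
          unfolding mul_diff_l[OF o o _ lA h, of "f n", OF fA[rule_format]] mul_diff_r[OF o o h _ lA, of "f n", OF fA[rule_format]]
          by (simp add: algebra_simps)
        also have "norm \<dots> \<le> norm (f n - l) * norm h + norm h * norm (f n - l)"
          using mul_norm[OF o o d h] mul_norm[OF o o h d] norm_triangle_ineq4[of "mul (f n - l) h" "mul h (f n - l)"]
          by linarith
        finally show "norm (mul (f n) h - mul h (f n) - (mul l h - mul h l)) \<le> (2 * norm h) * norm (f n - l)"
          by (simp add: algebra_simps)
      qed
      have "(\<lambda>n. mul (f n) h - mul h (f n)) = (\<lambda>n. 0)" using fS S_def by auto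
      then have "(\<lambda>n. 0) \<longlonglongrightarrow> mul l h - mul h l" using lim by simp
      then have "mul l h - mul h l = 0" using LIMSEQ_unique[OF _ tendsto_const[of 0]] by metis
      then show ?thesis by simp
    qed
    ultimately show "\<exists>l\<in>S. f \<longlonglongrightarrow> l" using lA fl S_def by auto
  qed
  have "\<exists>!x\<in>S. F x = x"
    by (rule Banach_fix[OF cS _ _ _ FS lip]) (use S0 in auto)
  then obtain e where eS: "e \<in> S" and eF: "F e = e" and uniq: "\<And>y. y \<in> S \<Longrightarrow> F y = y \<Longrightarrow> y = e"
    by blast
  have eA: "e \<in> A ?o" and en: "norm e \<le> 1/2" and ec: "mul e h = mul h e" using eS S_def by auto
  have io: "inv\<^bsub>G\<^esub> ?o = ?o" by simp
  have seA: "star e \<in> A ?o" using star_in[OF o eA] io by simp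
  have "star e \<in> S"
  proof -
    have "norm (star e) \<le> 1/2" using norm_star[OF o eA] en by simp
    moreover have "mul (star e) h = mul h (star e)"
      using star_mul[OF o o h eA] star_mul[OF o o eA h] hs ec by simp
    ultimately show ?thesis using seA S_def by auto
  qed
  moreover have "F (star e) = star e"
  proof -
    have z: "mul h h + mul e e \<in> A ?o" using hh mulo[OF eA eA] fib[OF o] csub_add by blast
    have "star (F e) = (-1/2) *\<^sub>R star (mul h h + mul e e)" unfolding F_def by (rule star_scaleR[OF o z])
    also have "\<dots> = (-1/2) *\<^sub>R (star (mul h h) + star (mul e e))" using star_add[OF o hh mulo[OF eA eA]] by simp
    also have "\<dots> = F (star e)" unfolding F_def using star_mul[OF o o h h] star_mul[OF o o eA eA] hs by simp
    finally show ?thesis using eF by simp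
  qed
  ultimately have "star e = e" using uniq by blast
  moreover have "e = (-1/2) *\<^sub>R (mul h h + mul e e)" using eF unfolding F_def by simp
  ultimately show ?thesis using eA ec by blast
qed

end

context P53 begin

lemma rho_scaleR_l: "g \<in> carrier G \<Longrightarrow> h \<in> carrier H \<Longrightarrow> a \<in> A g \<Longrightarrow> x \<in> X h \<Longrightarrow> rho (t *\<^sub>R a) x = t *\<^sub>R rho a x"
  using rho_sc_l[of g h a x "complex_of_real t"] by (simp add: A.sc_real CX.sc_real)

lemma rho_unitary_norm:
  assumes d: "d \<in> A \<one>\<^bsub>G\<^esub>" and d': "d' \<in> A \<one>\<^bsub>G\<^esub>" and sd: "starA d = d'"
    and rel: "d + d' + multA d' d = 0" and r: "r \<in> carrier H" and x: "x \<in> X r"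
  shows "norm (x + rho d x) = norm x"
proof -
  let ?o = "\<one>\<^bsub>G\<^esub>"
  have o: "?o \<in> carrier G" by simp
  have Xo: "rho a z \<in> X r" if "a \<in> A ?o" "z \<in> X r" for a z
    using rho_in[OF o r that] r by simp
  have dd: "multA d' d \<in> A ?o" using A.mul_in[OF o o d' d] by simp
  define y where "y = rho d x"
  have y: "y \<in> X r" using Xo[OF d x] y_def by simp
  have y': "rho d' x \<in> X r" using Xo[OF d' x] .
  have y'': "rho (multA d' d) x \<in> X r" using Xo[OF dd x] .
  have xy: "x + y \<in> X r" using x y X_fib[OF r] CX.csub_add by blast
  have "ip (x + y) (x + y) = ip x (x + y) + ip y (x + y)" using ip_add_l[OF r r x y xy] .
  also have "\<dots> = ip x x + (ip x y + ip y x + ip y y)"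
    using ip_add_r[OF r r x x y] ip_add_r[OF r r y x y] by (simp add: algebra_simps)
  also have "ip y x = ip x (rho d' x)" unfolding y_def using ip_rho[OF o d r r x x] sd by simp
  also have "ip y y = ip x (rho (multA d' d) x)"
    unfolding y_def using ip_rho[OF o d r r x y[unfolded y_def]] sd rho_mul[OF o o d' d r x] by simp
  also have "ip x y + ip x (rho d' x) + ip x (rho (multA d' d) x) = ip x (y + rho d' x + rho (multA d' d) x)"
    using ip_add_r[OF r r x y y'] ip_add_r[OF r r x _ y''] y y' X_fib[OF r] CX.csub_add by metis
  also have "y + rho d' x + rho (multA d' d) x = rho (d + d' + multA d' d) x"
  proof -
    have "d + d' \<in> A ?o" using d d' A.fib[OF o] A.csub_add by blast
    then show ?thesis unfolding y_def
      using rho_add_l[OF o r d d' x] rho_add_l[OF o r _ dd x, of "d + d'"] by simp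
  qed
  also have "\<dots> = 0" using rel rho_0_l[OF o r x] by simp
  finally have "ip (x + y) (x + y) = ip x x" using ip_0_r[OF r r x] by simp
  then show ?thesis using ip_norm[OF r xy] ip_norm[OF r x] y_def by simp
qed

lemma rho_sa_half:
  assumes h: "h \<in> A \<one>\<^bsub>G\<^esub>" and hs: "starA h = h" and hn: "norm h \<le> 1/2"
    and r: "r \<in> carrier H" and x: "x \<in> X r"
  shows "norm (rho h x) \<le> norm x"
proof -
  let ?o = "\<one>\<^bsub>G\<^esub>"
  have o: "?o \<in> carrier G" by simp
  have io: "inv\<^bsub>G\<^esub> ?o = ?o" by simp
  have mulo: "multA a b \<in> A ?o" if "a \<in> A ?o" "b \<in> A ?o" for a b
    using A.mul_in[OF o o that] by simp
  obtain e where eA: "e \<in> A ?o" and es: "starA e = e" and ec: "multA e h = multA h e"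
    and ee: "e = (-1/2) *\<^sub>R (multA h h + multA e e)"
    using A.sqrt_exists[OF h hs hn] by blast
  define s where "s = scA \<i> h"
  have sA: "s \<in> A ?o" unfolding s_def using h A.fib[OF o] A.csub_sc by blast
  have ss: "starA s = - s" unfolding s_def using A.star_sc[OF o h] hs A.sc_uminusc by simp
  define d where "d = e - s"
  define d' where "d' = e + s"
  have dA: "d \<in> A ?o" unfolding d_def using eA sA A.fib[OF o] A.csub_diff by blast
  have dA': "d' \<in> A ?o" unfolding d'_def using eA sA A.fib[OF o] A.csub_add by blast
  have sd: "starA d = d'" unfolding d_def d'_def using A.star_diff[OF o eA sA] es ss by simp
  have sd': "starA d' = d" unfolding d_def d'_def using A.star_add[OF o eA sA] es ss by simp
  have es_se: "multA e s = multA s e" unfolding s_def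
    using A.mul_sc_r[OF o o eA h] A.mul_sc_l[OF o o h eA] ec by simp
  have sss: "multA s s = - multA h h" unfolding s_def
    using A.mul_sc_r[OF o o _ h, of "scA \<i> h"] A.mul_sc_l[OF o o h h] sA[unfolded s_def] A.sc_neg1 by simp
  have p1: "multA d' d = multA e e + multA h h"
  proof -
    have "multA d' d = multA e (e - s) + multA s (e - s)"
      unfolding d_def d'_def using A.mul_add_l[OF o o eA sA dA[unfolded d_def]] .
    also have "\<dots> = multA e e - multA e s + (multA s e - multA s s)"
      using A.mul_diff_r[OF o o eA eA sA] A.mul_diff_r[OF o o sA eA sA] by simp
    finally show ?thesis using es_se sss by simp
  qed
  have p2: "multA d d' = multA e e + multA h h"
  proof -
    have "multA d d' = multA e (e + s) - multA s (e + s)"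
      unfolding d_def d'_def using A.mul_diff_l[OF o o eA sA dA'[unfolded d'_def]] .
    also have "\<dots> = multA e e + multA e s - (multA s e + multA s s)"
      using A.mul_add_r[OF o o eA eA sA] A.mul_add_r[OF o o sA eA sA] by simp
    finally show ?thesis using es_se sss by simp
  qed
  have z: "multA h h + multA e e = (-2) *\<^sub>R e"
  proof -
    have "(-2) *\<^sub>R e = (-2) *\<^sub>R ((-1/2) *\<^sub>R (multA h h + multA e e))" using ee by simp
    then show ?thesis by simp
  qed
  have rel1: "d + d' + multA d' d = 0"
  proof -
    have "d + d' + multA d' d = (e + e) + (multA h h + multA e e)"
      by (simp only: p1) (simp add: d_def d'_def algebra_simps)
    also have "\<dots> = 0" by (simp add: z flip: scaleR_2)
    finally show ?thesis .
  qed
  have rel2: "d' + d + multA d d' = 0"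
  proof -
    have "d' + d + multA d d' = (e + e) + (multA h h + multA e e)"
      by (simp only: p2) (simp add: d_def d'_def algebra_simps)
    also have "\<dots> = 0" by (simp add: z flip: scaleR_2)
    finally show ?thesis .
  qed
  have n1: "norm (x + rho d x) = norm x" by (rule rho_unitary_norm[OF dA dA' sd rel1 r x])
  have n2: "norm (x + rho d' x) = norm x" by (rule rho_unitary_norm[OF dA' dA sd' rel2 r x])
  have "(x + rho d' x) - (x + rho d x) = rho (d' - d) x"
    using rho_diff_l[OF o r dA' dA x] by simp
  also have "d' - d = s + s" unfolding d_def d'_def by simp
  also have "rho (s + s) x = rho s x + rho s x" using rho_add_l[OF o r sA sA x] .
  finally have "norm ((x + rho d' x) - (x + rho d x)) = 2 * norm (rho s x)" by (simp flip: scaleR_2)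
  moreover have "norm (rho s x) = norm (rho h x)" unfolding s_def using rho_sc_l[OF o r h x] CX.sc_norm by simp
  moreover have "norm ((x + rho d' x) - (x + rho d x)) \<le> norm x + norm x"
    using norm_triangle_ineq4[of "x + rho d' x" "x + rho d x"] n1 n2 by simp
  ultimately show ?thesis by simp
qed

lemma rho_sa:
  assumes h: "h \<in> A \<one>\<^bsub>G\<^esub>" and hs: "starA h = h" and r: "r \<in> carrier H" and x: "x \<in> X r"
  shows "norm (rho h x) \<le> 2 * norm h * norm x"
proof (cases "h = 0")
  case True
  then show ?thesis using rho_0_l[OF _ r x, of "\<one>\<^bsub>G\<^esub>"] by simp
next
  case False
  let ?o = "\<one>\<^bsub>G\<^esub>"
  have o: "?o \<in> carrier G" by simp
  define c where "c = 1 / (2 * norm h)"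
  have cp: "c > 0" using False c_def by simp
  have h': "c *\<^sub>R h \<in> A ?o" using h A.fib[OF o] A.csub_scaleR by blast
  have hs': "starA (c *\<^sub>R h) = c *\<^sub>R h" using A.star_scaleR[OF o h] hs by simp
  have hn': "norm (c *\<^sub>R h) \<le> 1/2" using cp False c_def by simp
  have "c * norm (rho h x) = norm (rho (c *\<^sub>R h) x)" using rho_scaleR_l[OF o r h x] cp by simp
  also have "\<dots> \<le> norm x" by (rule rho_sa_half[OF h' hs' hn' r x])
  finally have "c * norm (rho h x) \<le> norm x" .
  then have "norm (rho h x) \<le> norm x / c" using cp by (simp add: field_simps)
  then show ?thesis using c_def False by (simp add: mult_ac)
qed

end

context P53 begin

lemma rho_bound:
  assumes g: "g \<in> carrier G" and a: "a \<in> A g" and r: "r \<in> carrier H" and x: "x \<in> X r"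
  shows "norm (rho a x) \<le> 3 * norm a * norm x"
proof -
  let ?o = "\<one>\<^bsub>G\<^esub>"
  have k: "inv\<^bsub>G\<^esub> g \<in> carrier G" using g by simp
  have sa: "starA a \<in> A (inv\<^bsub>G\<^esub> g)" using A.star_in[OF g a] .
  define h where "h = multA (starA a) a"
  have hA: "h \<in> A ?o" unfolding h_def using A.mul_in[OF k g sa a] g by simp
  have hs: "starA h = h" unfolding h_def using A.star_mul[OF k g sa a] A.star_star[OF g a] by simp
  have hn: "norm h = (norm a)\<^sup>2" unfolding h_def using A.cstar[OF g a] .
  have s': "\<phi> g \<otimes>\<^bsub>H\<^esub> r \<in> carrier H" using g r by simp
  define y where "y = rho a x"
  have y: "y \<in> X (\<phi> g \<otimes>\<^bsub>H\<^esub> r)" unfolding y_def using rho_in[OF g r a x] .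
  have hx: "rho h x \<in> X r" using rho_in[OF _ r hA x] r by simp
  have "ip y y = ip x (rho (starA a) y)" unfolding y_def using ip_rho[OF g a r s' x y[unfolded y_def]] .
  also have "\<dots> = ip x (rho h x)" unfolding y_def h_def using rho_mul[OF k g sa a r x] by simp
  finally have "(norm y)\<^sup>2 = norm (ip x (rho h x))" using norm_sq[OF s' y] by simp
  also have "\<dots> \<le> 4 * norm x * norm (rho h x)" using cs_same[OF r x hx] .
  also have "\<dots> \<le> 4 * norm x * (2 * norm h * norm x)"
    by (rule mult_left_mono[OF rho_sa[OF hA hs r x]]) simp
  also have "\<dots> \<le> (3 * norm a * norm x)\<^sup>2" using hn by (simp add: power2_eq_square mult_right_mono)
  finally show ?thesis unfolding y_def by (rule power2_le_imp_le) simp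
qed

lemma ip_sum_r: assumes r: "r \<in> carrier H" "s \<in> carrier H" "x \<in> X r" and f: "\<And>i. i \<in> I \<Longrightarrow> f i \<in> X s"
  shows "ip x (\<Sum>i\<in>I. f i) = (\<Sum>i\<in>I. ip x (f i))"
  using f
proof (induction I rule: infinite_finite_induct)
  case (infinite A) then show ?case using ip_0_r[OF r(1,2,3)] by simp
next
  case empty then show ?case using ip_0_r[OF r(1,2,3)] by simp
next
  case (insert i F)
  have "sum f F \<in> X s" using insert.prems X_fib[OF r(2)] CX.csub_sum by blast
  then show ?case using insert ip_add_r[OF r(1,2,3) _ \<open>sum f F \<in> X s\<close>, of "f i"] by simp
qed

lemma ip_sum_l: assumes r: "r \<in> carrier H" "s \<in> carrier H" "y \<in> X s" and f: "\<And>i. i \<in> I \<Longrightarrow> f i \<in> X r"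
  shows "ip (\<Sum>i\<in>I. f i) y = (\<Sum>i\<in>I. ip (f i) y)"
  using f
proof (induction I rule: infinite_finite_induct)
  case (infinite A) then show ?case using ip_0_l[OF r(1,2,3)] by simp
next
  case empty then show ?case using ip_0_l[OF r(1,2,3)] by simp
next
  case (insert i F)
  have "sum f F \<in> X r" using insert.prems X_fib[OF r(1)] CX.csub_sum by blast
  then show ?case using insert ip_add_l[OF r(1,2) _ \<open>sum f F \<in> X r\<close> r(3), of "f i"] by simp
qed

lemma main:
  assumes x: "x \<in> X \<one>\<^bsub>H\<^esub>"
  shows "bundle_map G \<phi> scA A scB B (\<lambda>g a. ip x (rho a x))
       \<and> positive_definite G H \<phi> A multA starA scB B multB starB (\<lambda>g a. ip x (rho a x))"
proof
  let ?e = "\<one>\<^bsub>H\<^esub>"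
  have e: "?e \<in> carrier H" by simp
  show "bundle_map G \<phi> scA A scB B (\<lambda>g a. ip x (rho a x))"
    unfolding bundle_map_def
  proof (intro ballI conjI)
    fix g assume g: "g \<in> carrier G"
    have pg: "\<phi> g \<in> carrier H" using g by simp
    have Xg: "rho a x \<in> X (\<phi> g)" if "a \<in> A g" for a using rho_in[OF g e that x] pg by simp
    show "ip x (rho a x) \<in> B (\<phi> g)" if "a \<in> A g" for a
      using ip_in[OF e pg x Xg[OF that]] pg by simp
    show "clinear_on scA scB (A g) (\<lambda>a. ip x (rho a x))"
      unfolding clinear_on_def
    proof (intro conjI ballI allI)
      fix a a' assume a: "a \<in> A g" and a': "a' \<in> A g"
      show "ip x (rho (a + a') x) = ip x (rho a x) + ip x (rho a' x)"
        using rho_add_l[OF g e a a' x] ip_add_r[OF e pg x Xg[OF a] Xg[OF a']] by simp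
    next
      fix c a assume a: "a \<in> A g"
      show "ip x (rho (scA c a) x) = scB c (ip x (rho a x))"
        using rho_sc_l[OF g e a x] ip_sc_r[OF e pg x Xg[OF a]] by simp
    qed
    show "\<exists>K. \<forall>a\<in>A g. norm (ip x (rho a x)) \<le> K * norm a"
    proof (intro exI ballI)
      fix a assume a: "a \<in> A g"
      have "norm (ip x (rho a x)) \<le> 4 * norm x * norm (rho a x)" using cs_gen[OF e pg x Xg[OF a]] .
      also have "\<dots> \<le> 4 * norm x * (3 * norm a * norm x)"
        by (rule mult_left_mono[OF rho_bound[OF g a e x]]) simp
      also have "\<dots> = (12 * norm x * norm x) * norm a" by simp
      finally show "norm (ip x (rho a x)) \<le> (12 * norm x * norm x) * norm a" .
    qed
  qed
  show "positive_definite G H \<phi> A multA starA scB B multB starB (\<lambda>g a. ip x (rho a x))"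
    unfolding positive_definite_def
  proof (intro allI impI)
    fix n :: nat and gs :: "nat \<Rightarrow> 'g" and as bs
    assume hyp: "\<forall>i<n. gs i \<in> carrier G \<and> as i \<in> A (gs i) \<and> bs i \<in> B (\<phi> (gs i))"
    have gi: "gs i \<in> carrier G" and ai: "as i \<in> A (gs i)" and bi: "bs i \<in> B (\<phi> (gs i))" if "i < n" for i
      using hyp that by auto
    have pg: "\<phi> (gs i) \<in> carrier H" if "i < n" for i using gi[OF that] by simp
    define u where "u i = rho (as i) x" for i
    define c where "c i = starB (bs i)" for i
    define y where "y i = rmul (u i) (c i)" for i
    have u: "u i \<in> X (\<phi> (gs i))" if "i < n" for i
      unfolding u_def using rho_in[OF gi[OF that] e ai[OF that] x] pg[OF that] by simp
    have ipg: "inv\<^bsub>H\<^esub> \<phi> (gs i) \<in> carrier H" if "i < n" for i using pg[OF that] by simp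
    have c: "c i \<in> B (inv\<^bsub>H\<^esub> \<phi> (gs i))" if "i < n" for i
      unfolding c_def using B.star_in[OF pg[OF that] bi[OF that]] .
    have y: "y i \<in> X ?e" if "i < n" for i
      unfolding y_def using rmul_in[OF pg[OF that] ipg[OF that] u[OF that] c[OF that]] pg[OF that] by simp
    define Y where "Y = (\<Sum>i<n. y i)"
    have Y: "Y \<in> X ?e" unfolding Y_def using y X_fib[OF e] CX.csub_sum by (metis lessThan_iff)
    have trm: "ip (y i) (y j) = multB (multB (bs i) (ip x (rho (multA (starA (as i)) (as j)) x))) (starB (bs j))"
      if i: "i < n" and j: "j < n" for i j
    proof -
      have "ip (y i) (y j) = multB (ip (y i) (u j)) (c j)"
        unfolding y_def[of j] using ip_rmul[OF e pg[OF j] ipg[OF j] y[OF i] u[OF j] c[OF j]] .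
      also have "ip (y i) (u j) = multB (starB (c i)) (ip (u i) (u j))"
        unfolding y_def[of i] using ip_rmul_l[OF pg[OF i] pg[OF j] ipg[OF i] u[OF i] u[OF j] c[OF i]] .
      also have "starB (c i) = bs i" unfolding c_def using B.star_star[OF pg[OF i] bi[OF i]] .
      also have "ip (u i) (u j) = ip x (rho (starA (as i)) (u j))"
        unfolding u_def[of i] using ip_rho[OF gi[OF i] ai[OF i] e pg[OF j] x u[OF j]] .
      also have "rho (starA (as i)) (u j) = rho (multA (starA (as i)) (as j)) x"
        unfolding u_def using rho_mul[OF _ gi[OF j] A.star_in[OF gi[OF i] ai[OF i]] ai[OF j] e x] gi[OF i] by simp
      finally show ?thesis unfolding c_def by simp
    qed
    have s1: "ip Y Y = (\<Sum>i<n. ip (y i) Y)" unfolding Y_def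
      by (rule ip_sum_l[OF e e Y[unfolded Y_def]]) (rule y, simp)
    have s2: "ip (y i) Y = (\<Sum>j<n. ip (y i) (y j))" if "i < n" for i unfolding Y_def
      by (rule ip_sum_r[OF e e y[OF that]]) (rule y, simp)
    have "ip Y Y = (\<Sum>i<n. \<Sum>j<n. ip (y i) (y j))"
      using s1 s2 by simp
    also have "\<dots> = (\<Sum>i<n. \<Sum>j<n. multB (multB (bs i) (ip x (rho (multA (starA (as i)) (as j)) x))) (starB (bs j)))"
      using trm by simp
    finally have eq: "ip Y Y = (\<Sum>i<n. \<Sum>j<n. multB (multB (bs i) (ip x (rho (multA (starA (as i)) (as j)) x))) (starB (bs j)))" .
    show "positive_elem (B \<one>\<^bsub>H\<^esub>) scB multB starB
          (\<Sum>i<n. \<Sum>j<n. multB (multB (bs i) (ip x (rho (multA (starA (as i)) (as j)) x))) (starB (bs j)))"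
      using ip_pos[OF e Y] eq by simp
  qed
qed

end

theorem proposition5p3:
  fixes G :: "('g, 'gm) monoid_scheme" and H :: "('h, 'hm) monoid_scheme"
    and \<phi> :: "'g \<Rightarrow> 'h"
    and scA :: "complex \<Rightarrow> 'a::real_normed_vector \<Rightarrow> 'a" and A :: "'g \<Rightarrow> 'a set"
    and multA :: "'a \<Rightarrow> 'a \<Rightarrow> 'a" and starA :: "'a \<Rightarrow> 'a"
    and scB :: "complex \<Rightarrow> 'b::real_normed_vector \<Rightarrow> 'b" and B :: "'h \<Rightarrow> 'b set"
    and multB :: "'b \<Rightarrow> 'b \<Rightarrow> 'b" and starB :: "'b \<Rightarrow> 'b"
    and scX :: "complex \<Rightarrow> 'x::real_normed_vector \<Rightarrow> 'x" and X :: "'h \<Rightarrow> 'x set"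
    and rmul :: "'x \<Rightarrow> 'b \<Rightarrow> 'x" and ip :: "'x \<Rightarrow> 'x \<Rightarrow> 'b"
    and rho :: "'a \<Rightarrow> 'x \<Rightarrow> 'x" and x :: 'x
  assumes "group G" and "group H"
    and "fell_bundle G scA A multA starA"
    and "fell_bundle H scB B multB starB"
    and "\<phi> \<in> hom G H"
    and "hilbert_bundle H scB B multB starB scX X rmul ip"
    and "bundle_action G H \<phi> scA A multA starA scX X rmul ip B rho"
    and "x \<in> X \<one>\<^bsub>H\<^esub>"
  shows "bundle_map G \<phi> scA A scB B (\<lambda>g a. ip x (rho a x))
       \<and> positive_definite G H \<phi> A multA starA scB B multB starB (\<lambda>g a. ip x (rho a x))"
proof -
  have csA: "complex_scaling scA" using assms(3) unfolding fell_bundle_def by simp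
  have csB: "complex_scaling scB" using assms(4) unfolding fell_bundle_def by simp
  have fA: "fellb G scA A multA starA"
    by (intro fellb.intro cs.intro fellb_axioms.intro csA assms(1,3))
  have fB: "fellb H scB B multB starB"
    by (intro fellb.intro cs.intro fellb_axioms.intro csB assms(2,4))
  interpret P53 G scA A multA starA H scB B multB starB \<phi> scX X rmul ip rho
    by (intro P53.intro P53_axioms.intro fA fB assms(5,6,7))
  show ?thesis by (rule main[OF assms(8)])
qed

end
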